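(* Let $K$ be a field and $X=\{y_{ij}\mid i,j\in\mathbb N,\ i\ge j\}$. For all $b_0,b_1\in K[X]$ the set $(\mathrm{Inc}(\mathbb N)b_0)\times(\mathrm{Inc}(\mathbb N)b_1)$ is the union of finitely many $\mathrm{Inc}(\mathbb N)$-orbits under the diagonal action.
   Context: $\mathrm{Inc}(\mathbb N)$ is the monoid of strictly increasing maps $\pi:\mathbb N\to\mathbb N$, acting on $K[X]$ by ring homomorphisms with $\pi y_{ij}=y_{\pi(i)\pi(j)}$; the diagonal action on $K[X]\times K[X]$ is $\pi(f,h)=(\pi f,\pi h)$, and an orbit is a set $\{\pi(f,h)\mid \pi\in\mathrm{Inc}(\mathbb N)\}$. *)

theory Defs
  imports Main "HOL-Library.Poly_Mapping"
begin

text \<open>Polynomials over a coefficient type 'k in variables indexed by nat \<times> nat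
  (variable (i,j) stands for y_ij): a finitely supported map from monomials
  (finitely supported exponent vectors) to coefficients.\<close>

type_synonym 'k ypoly = "((nat \<times> nat) \<Rightarrow>\<^sub>0 nat) \<Rightarrow>\<^sub>0 'k"

definition Xvars :: "(nat \<times> nat) set" where
  "Xvars = {(i, j). j \<le> i}"

definition KX :: "'k::field ypoly set" where
  "KX = {f :: 'k ypoly. \<forall>m \<in> Poly_Mapping.keys f. Poly_Mapping.keys m \<subseteq> Xvars}"

definition yvar :: "nat \<times> nat \<Rightarrow> 'k::field ypoly" where
  "yvar v = Poly_Mapping.single (Poly_Mapping.single v 1) 1"

definition const :: "'k::field \<Rightarrow> 'k ypoly" where
  "const c = Poly_Mapping.single 0 c"

definition IncN :: "(nat \<Rightarrow> nat) set" where
  "IncN = {\<pi>. strict_mono \<pi>}"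

definition inc_act :: "(nat \<Rightarrow> nat) \<Rightarrow> 'k::field ypoly \<Rightarrow> 'k ypoly" where
  "inc_act \<pi> f = (\<Sum>m\<in>Poly_Mapping.keys f. const (Poly_Mapping.lookup f m) *
      (\<Prod>v\<in>Poly_Mapping.keys m. yvar (\<pi> (fst v), \<pi> (snd v)) ^ Poly_Mapping.lookup m v))"

definition orbit :: "'k::field ypoly \<Rightarrow> 'k ypoly set" where
  "orbit f = {inc_act \<pi> f | \<pi>. \<pi> \<in> IncN}"

definition diag_orbit :: "'k::field ypoly \<times> 'k ypoly \<Rightarrow> ('k ypoly \<times> 'k ypoly) set" where
  "diag_orbit p = {(inc_act \<pi> (fst p), inc_act \<pi> (snd p)) | \<pi>. \<pi> \<in> IncN}"

end

theory Submission imports Defs "HOL-Library.Infinite_Set" "HOL-Library.FuncSet" begin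

definition lin :: "('a \<Rightarrow> 'c) \<Rightarrow> ('a \<Rightarrow>\<^sub>0 'b::comm_monoid_add) \<Rightarrow> ('c \<Rightarrow>\<^sub>0 'b)" where
  "lin \<phi> f = (\<Sum>m\<in>Poly_Mapping.keys f. Poly_Mapping.single (\<phi> m) (Poly_Mapping.lookup f m))"

lemma lin_add: "lin \<phi> (f + g) = lin \<phi> f + lin \<phi> g"
  unfolding lin_def
  by (rule setsum_keys_plus_distrib) (simp_all add: single_add)

lemma lin_zero[simp]: "lin \<phi> 0 = 0"
  by (simp add: lin_def)

lemma lin_single[simp]: "lin \<phi> (Poly_Mapping.single a c) = Poly_Mapping.single (\<phi> a) c"
  by (simp add: lin_def)

lemma lin_sum: "lin \<phi> (\<Sum>i\<in>I. g i) = (\<Sum>i\<in>I. lin \<phi> (g i))"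
  by (induction I rule: infinite_finite_induct) (simp_all add: lin_add)

lemma lin_comp: "lin \<psi> (lin \<phi> f) = lin (\<psi> \<circ> \<phi>) f"
proof -
  have "lin \<psi> (lin \<phi> f) = (\<Sum>m\<in>Poly_Mapping.keys f. lin \<psi> (Poly_Mapping.single (\<phi> m) (Poly_Mapping.lookup f m)))"
    by (simp only: lin_def[of \<phi> f] lin_sum)
  also have "\<dots> = lin (\<psi> \<circ> \<phi>) f"
    by (simp add: lin_def[of "\<psi> \<circ> \<phi>"])
  finally show ?thesis .
qed

lemma lin_cong: "(\<And>m. m \<in> Poly_Mapping.keys f \<Longrightarrow> \<phi> m = \<psi> m) \<Longrightarrow> lin \<phi> f = lin \<psi> f"
  by (simp add: lin_def)

lemma keys_lin: "Poly_Mapping.keys (lin \<phi> f) \<subseteq> \<phi> ` Poly_Mapping.keys f"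
proof
  fix x assume "x \<in> Poly_Mapping.keys (lin \<phi> f)"
  then obtain m where "m \<in> Poly_Mapping.keys f" "x \<in> Poly_Mapping.keys (Poly_Mapping.single (\<phi> m) (Poly_Mapping.lookup f m))"
    using keys_sum[of "\<lambda>m. Poly_Mapping.single (\<phi> m) (Poly_Mapping.lookup f m)" "Poly_Mapping.keys f"]
    unfolding lin_def by (meson UN_E subsetD)
  then show "x \<in> \<phi> ` Poly_Mapping.keys f" by (auto split: if_splits)
qed



lemma yvar_pow: "(yvar w :: 'k::field ypoly) ^ e = Poly_Mapping.single (Poly_Mapping.single w e) 1"
  unfolding yvar_def
  by (induction e) (simp_all add: mult_single single_add[symmetric] add.commute)

lemma prod_single: "finite A \<Longrightarrow> (\<Prod>v\<in>A. (Poly_Mapping.single (g v) 1 :: 'k::field ypoly)) = Poly_Mapping.single (\<Sum>v\<in>A. g v) 1"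
  by (induction A rule: finite_induct) (simp_all add: mult_single)

definition pmap :: "(nat \<Rightarrow> nat) \<Rightarrow> nat \<times> nat \<Rightarrow> nat \<times> nat" where
  "pmap \<pi> v = (\<pi> (fst v), \<pi> (snd v))"

lemma inc_act_lin: "inc_act \<pi> (f :: 'k::field ypoly) = lin (lin (pmap \<pi>)) f"
  unfolding inc_act_def lin_def
  apply (rule sum.cong[OF refl])
  apply (simp only: yvar_pow prod_single[OF finite_keys] const_def mult_single pmap_def)
  apply simp
  done

lemma inc_act_comp: "inc_act \<tau> (inc_act \<pi> (f :: 'k::field ypoly)) = inc_act (\<tau> \<circ> \<pi>) f"
proof -
  have "inc_act \<tau> (inc_act \<pi> f) = lin (lin (pmap \<tau>) \<circ> lin (pmap \<pi>)) f"
    by (simp add: inc_act_lin lin_comp)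
  also have "lin (pmap \<tau>) \<circ> lin (pmap \<pi>) = lin (pmap (\<tau> \<circ> \<pi>))"
  proof -
    have "pmap \<tau> \<circ> pmap \<pi> = pmap (\<tau> \<circ> \<pi>)" by (rule ext) (simp add: pmap_def)
    then show ?thesis by (simp only: lin_comp[abs_def] comp_def)
  qed
  finally show ?thesis by (simp add: inc_act_lin)
qed

lemma inc_act_cong:
  assumes "\<And>m v. m \<in> Poly_Mapping.keys f \<Longrightarrow> v \<in> Poly_Mapping.keys m \<Longrightarrow>
     \<pi> (fst v) = \<rho> (fst v) \<and> \<pi> (snd v) = \<rho> (snd v)"
  shows "inc_act \<pi> (f :: 'k::field ypoly) = inc_act \<rho> f"
  unfolding inc_act_lin
  by (rule lin_cong, rule lin_cong) (use assms in \<open>auto simp: pmap_def\<close>)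

lemma inc_act_KX:
  assumes "strict_mono \<pi>" "f \<in> KX"
  shows "inc_act \<pi> (f :: 'k::field ypoly) \<in> KX"
  unfolding KX_def
proof (intro CollectI ballI)
  fix m assume "m \<in> Poly_Mapping.keys (inc_act \<pi> f)"
  then have "m \<in> lin (pmap \<pi>) ` Poly_Mapping.keys f"
    unfolding inc_act_lin using keys_lin[of "lin (pmap \<pi>)" f] by (rule subsetD[rotated])
  then obtain m0 where m0: "m0 \<in> Poly_Mapping.keys f" "m = lin (pmap \<pi>) m0"
    by (rule imageE) auto
  have "Poly_Mapping.keys m0 \<subseteq> Xvars" using assms(2) m0(1) unfolding KX_def by blast
  have "pmap \<pi> ` Poly_Mapping.keys m0 \<subseteq> Xvars"
  proof
    fix w assume "w \<in> pmap \<pi> ` Poly_Mapping.keys m0"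
    then obtain v where v: "v \<in> Poly_Mapping.keys m0" "w = pmap \<pi> v" by blast
    then have "snd v \<le> fst v" using \<open>Poly_Mapping.keys m0 \<subseteq> Xvars\<close> by (auto simp: Xvars_def)
    then have "\<pi> (snd v) \<le> \<pi> (fst v)" using assms(1) by (simp add: strict_mono_less_eq)
    then show "w \<in> Xvars" using v by (simp add: Xvars_def pmap_def case_prod_beta)
  qed
  then show "Poly_Mapping.keys m \<subseteq> Xvars" using keys_lin[of "pmap \<pi>" m0] m0(2) by (simp only: order_trans)
qed

lemma enum_bound:
  fixes T :: "nat set"
  assumes "finite T" "\<forall>x\<in>T. x < M" "e = enumerate (T \<union> {M..})" "e k \<in> T"
  shows "k < card T"
proof -
  have inf: "infinite (T \<union> {M..})" using infinite_Ici by blast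
  have "e ` {..k} \<subseteq> T"
  proof
    fix x assume "x \<in> e ` {..k}"
    then obtain j where j: "j \<le> k" "x = e j" by auto
    have "e j \<le> e k" using j(1) inf assms(3) by simp
    moreover have "e j \<in> T \<union> {M..}" using enumerate_in_set[OF inf] assms(3) by simp
    ultimately show "x \<in> T" using j assms(2,4) by fastforce
  qed
  moreover have "inj_on e {..k}" using inf assms(3)
    by (metis inj_enumerate inj_on_subset subset_UNIV)
  ultimately have "card {..k} \<le> card T" using card_inj_on_le assms(1) by blast
  then show ?thesis by simp
qed

theorem lemma3p4:
  fixes b0 b1 :: "'k::field ypoly"
  assumes "b0 \<in> KX" and "b1 \<in> KX"
  shows "\<exists>F. finite F \<and> F \<subseteq> KX \<times> KX \<and>
           orbit b0 \<times> orbit b1 = (\<Union>p\<in>F. diag_orbit p)"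
proof -
  define V where "V = (\<Union>m\<in>Poly_Mapping.keys b0 \<union> Poly_Mapping.keys b1. Poly_Mapping.keys m)"
  have "finite V" unfolding V_def by simp
  then have "finite (fst ` V)" by simp
  then obtain n where n: "fst ` V \<subseteq> {..<n}" by (auto simp: finite_nat_set_iff_bounded)
  have idx: "fst v < n \<and> snd v < n" if "m \<in> Poly_Mapping.keys b" "v \<in> Poly_Mapping.keys m" "b = b0 \<or> b = b1" for b m v
  proof -
    have "v \<in> V" using that unfolding V_def by blast
    then have "fst v < n" using n by blast
    moreover have "v \<in> Xvars" using that assms unfolding KX_def by blast
    then have "snd v \<le> fst v" unfolding Xvars_def by (auto simp: case_prod_beta)
    ultimately show ?thesis by simp
  qed
  have cong: "inc_act \<pi> b = inc_act \<rho> b" if "\<forall>i<n. \<pi> i = \<rho> i" "b = b0 \<or> b = b1" for \<pi> \<rho> b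
    by (rule inc_act_cong) (use idx that in blast)
  define S where "S = {g :: nat \<Rightarrow> nat. strict_mono g \<and> (\<forall>i<n. g i < 2*n) \<and> (\<forall>i. n \<le> i \<longrightarrow> g i = 2*n+i)}"
  define ext where "ext = (\<lambda>h (i::nat). if i < n then h i else 2*n+i)"
  have "S \<subseteq> ext ` ({..<n} \<rightarrow>\<^sub>E {..<2*n})"
  proof
    fix g assume g: "g \<in> S"
    have "g = ext (restrict g {..<n})" using g unfolding S_def ext_def by (auto simp: fun_eq_iff)
    moreover have "restrict g {..<n} \<in> {..<n} \<rightarrow>\<^sub>E {..<2*n}" using g unfolding S_def by auto
    ultimately show "g \<in> ext ` ({..<n} \<rightarrow>\<^sub>E {..<2*n})" by blast
  qed
  then have finS: "finite S" by (rule finite_subset) (simp add: finite_PiE)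
  define F where "F = (\<lambda>(g,h). (inc_act g b0, inc_act h b1)) ` (S \<times> S)"
  have "finite F" unfolding F_def using finS by simp
  moreover have "F \<subseteq> KX \<times> KX" unfolding F_def S_def using assms inc_act_KX by auto
  moreover have "orbit b0 \<times> orbit b1 = (\<Union>p\<in>F. diag_orbit p)"
  proof
    show "(\<Union>p\<in>F. diag_orbit p) \<subseteq> orbit b0 \<times> orbit b1"
    proof
      fix x assume "x \<in> (\<Union>p\<in>F. diag_orbit p)"
      then obtain g h \<tau> where gh: "g \<in> S" "h \<in> S" "strict_mono \<tau>"
        "x = (inc_act \<tau> (inc_act g b0), inc_act \<tau> (inc_act h b1))"
        unfolding F_def diag_orbit_def IncN_def by auto
      then have "x = (inc_act (\<tau> \<circ> g) b0, inc_act (\<tau> \<circ> h) b1)" by (simp add: inc_act_comp)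
      moreover have "strict_mono (\<tau> \<circ> g)" "strict_mono (\<tau> \<circ> h)"
        using gh unfolding S_def by (auto simp: strict_mono_def)
      ultimately show "x \<in> orbit b0 \<times> orbit b1" unfolding orbit_def IncN_def by blast
    qed
  next
    show "orbit b0 \<times> orbit b1 \<subseteq> (\<Union>p\<in>F. diag_orbit p)"
    proof
      fix x assume "x \<in> orbit b0 \<times> orbit b1"
      then obtain \<pi> \<sigma> where ps: "strict_mono \<pi>" "strict_mono \<sigma>" "x = (inc_act \<pi> b0, inc_act \<sigma> b1)"
        unfolding orbit_def IncN_def by auto
      define T where "T = \<pi> ` {..<n} \<union> \<sigma> ` {..<n}"
      have finT: "finite T" unfolding T_def by simp
      have cardT: "card T \<le> 2*n"
      proof -
        have "card T \<le> card (\<pi> ` {..<n}) + card (\<sigma> ` {..<n})" unfolding T_def by (rule card_Un_le)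
        also have "\<dots> \<le> n + n" using card_image_le[of "{..<n}" \<pi>] card_image_le[of "{..<n}" \<sigma>] by simp
        finally show ?thesis by simp
      qed
      define M where "M = Suc (Max (insert 0 T))"
      have TM: "\<forall>x\<in>T. x < M" unfolding M_def using finT by (simp add: le_imp_less_Suc)
      define e where "e = enumerate (T \<union> {M..})"
      have inf: "infinite (T \<union> {M..})" using infinite_Ici by blast
      have emono: "strict_mono e" unfolding e_def using inf by (simp add: strict_mono_def)
      have ex: "\<exists>k. e k = y" if "y \<in> T" for y
        unfolding e_def using enumerate_Ex[OF inf] that by blast
      define ix where "ix = (\<lambda>y. LEAST k. e k = y)"
      have ixe: "e (ix y) = y" if "y \<in> T" for y
        unfolding ix_def using LeastI_ex[OF ex[OF that]] .
      have ixb: "ix y < 2*n" if "y \<in> T" for y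
      proof -
        have "ix y < card T" using enum_bound[OF finT TM e_def, of "ix y"] ixe[OF that] that by simp
        then show ?thesis using cardT by linarith
      qed
      have mk: "\<exists>g\<in>S. \<forall>i<n. e (g i) = \<rho> i" if rho: "strict_mono \<rho>" "\<rho> ` {..<n} \<subseteq> T" for \<rho>
      proof
        define g where "g = (\<lambda>i. if i < n then ix (\<rho> i) else 2*n+i)"
        have inT: "\<rho> i \<in> T" if "i < n" for i using rho that by blast
        show "\<forall>i<n. e (g i) = \<rho> i" unfolding g_def using ixe inT by simp
        have "strict_mono g"
        proof (rule strict_monoI)
          fix i j :: nat assume ij: "i < j"
          show "g i < g j"
          proof (cases "j < n")
            case True
            then have "e (g i) < e (g j)" unfolding g_def using ixe inT ij rho(1)
              by (simp add: strict_mono_less)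
            then show ?thesis using emono by (simp add: strict_mono_less)
          next
            case False
            then show ?thesis unfolding g_def using ixb inT ij by (auto intro: less_le_trans[OF ixb])
          qed
        qed
        then show "g \<in> S" unfolding S_def g_def using ixb inT by auto
      qed
      obtain g where g: "g \<in> S" "\<forall>i<n. e (g i) = \<pi> i"
        using mk[OF ps(1)] unfolding T_def by blast
      obtain h where h: "h \<in> S" "\<forall>i<n. e (h i) = \<sigma> i"
        using mk[OF ps(2)] unfolding T_def by blast
      have "inc_act \<pi> b0 = inc_act e (inc_act g b0)"
        unfolding inc_act_comp by (rule cong) (use g in auto)
      moreover have "inc_act \<sigma> b1 = inc_act e (inc_act h b1)"
        unfolding inc_act_comp by (rule cong) (use h in auto)
      ultimately have "x \<in> diag_orbit (inc_act g b0, inc_act h b1)"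
        unfolding diag_orbit_def IncN_def using ps(3) emono by auto
      moreover have "(inc_act g b0, inc_act h b1) \<in> F" unfolding F_def using g(1) h(1) by (intro image_eqI[of _ _ "(g, h)"]) auto
      ultimately show "x \<in> (\<Union>p\<in>F. diag_orbit p)" by blast
    qed
  qed
  ultimately show ?thesis by blast
qed

end
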